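(* (a) Let $B^L$ be a segment of the left boundary of $S_{slit}$ (oriented either way), and suppose $K_1$ extends continuously to $B^L$ with $K_1(z_1)\in e^{-i\pi/4}\mathbb R$ for all $z_1\in B^L$. Then for every $z_2\in S_{slit}$, $$\int_{B^L}\big(\mathcal K^{\circ\circ}_{K_1,K_2}(z_1,z_2)\,dz_1+\mathcal K^{\bullet\circ}_{K_1,K_2}(z_1,z_2)\,d\bar z_1\big)=0,\qquad\int_{B^L}\big(\mathcal K^{\circ\bullet}_{K_1,K_2}(z_1,z_2)\,dz_1+\mathcal K^{\bullet\bullet}_{K_1,K_2}(z_1,z_2)\,d\bar z_1\big)=0.$$ (b) Let $B^R$ be a segment of the right boundary of $S_{slit}$, and suppose $K_1$ extends continuously to $B^R$ with $K_1(z_1)\in e^{i\pi/4}\mathbb R$ for all $z_1\in B^R$. Then for every $z_2\in S_{slit}$ the same two integrals over $B^R$ vanish.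
   Context: $S=\{z\in\mathbb C:-\frac12<\mathrm{Re}\,z<\frac12\}$ and $S_{slit}=S\setminus\{iy:y\le0\}$. Each point $iy$, $y<0$, of the slit gives two prime ends $0^-+iy$ (seen from $\mathrm{Re}\,z<0$) and $0^++iy$ (seen from $\mathrm{Re}\,z>0$). The left boundary of $S_{slit}$ is $\{-\frac12+iy:y\in\mathbb R\}\cup\{0^++iy:y<0\}$ and the right boundary is $\{\frac12+iy:y\in\mathbb R\}\cup\{0^-+iy:y<0\}$. $\varphi:S_{slit}\to\mathbb H$ is the conformal map onto the upper half-plane sending the top extremity ($\mathrm{Im}\,z\to+\infty$) to $\infty$, the bottom-left extremity to $-\frac12$ and the bottom-right extremity to $+\frac12$ (explicitly $\varphi(z)=\frac12\sqrt{1-e^{-2\pi iz}}$ for a suitable branch); it extends analytically to the boundary arcs. Fix a continuous branch of $\sqrt{\varphi'}$. For functions $K_1,K_2$ defined at $z_1,z_2$ respectively (bars denote complex conjugation): $\mathcal K^{\circ\circ}_{K_1,K_2}(z_1,z_2)=\frac{K_1(z_1)\sqrt{\varphi'(z_1)}\,K_2(z_2)\sqrt{\varphi'(z_2)}}{\varphi(z_1)-\varphi(z_2)}$, $\mathcal K^{\circ\bullet}_{K_1,K_2}=\frac{K_1(z_1)\sqrt{\varphi'(z_1)}\,\overline{K_2(z_2)\sqrt{\varphi'(z_2)}}}{\varphi(z_1)-\overline{\varphi(z_2)}}$, $\mathcal K^{\bullet\circ}_{K_1,K_2}=\frac{\overline{K_1(z_1)\sqrt{\varphi'(z_1)}}\,K_2(z_2)\sqrt{\varphi'(z_2)}}{\overline{\varphi(z_1)}-\varphi(z_2)}$,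 $\mathcal K^{\bullet\bullet}_{K_1,K_2}=\frac{\overline{K_1(z_1)\sqrt{\varphi'(z_1)}}\,\overline{K_2(z_2)\sqrt{\varphi'(z_2)}}}{\overline{\varphi(z_1)}-\overline{\varphi(z_2)}}$. *)

theory Defs
  imports "HOL-Analysis.Analysis"
begin

definition S_slit :: "complex set" where
  "S_slit = {z. - 1/2 < Re z \<and> Re z < 1/2} - {z. Re z = 0 \<and> Im z \<le> 0}"

text \<open>The conformal map phi : S_slit -> H, phi(z) = 1/2 sqrt(1 - e^(-2 pi i z)),
  with the branch of the square root taking values in the upper half plane
  (written via the principal square root: i * csqrt(e^(-2 pi i z) - 1)).\<close>
definition phi :: "complex \<Rightarrow> complex" where
  "phi z = (1/2) * (\<i> * csqrt (exp (- 2 * of_real pi * \<i> * z) - 1))"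

text \<open>Boundary points are written as complex numbers x0 + iy; a point iy (y<0) of the
  slit is ambiguous, so a prime end is determined by the point together with the side
  from which it is seen.  For the LEFT boundary the slit points are the prime ends 0^+ + iy
  (seen from Re z > 0); for the RIGHT boundary they are 0^- + iy (seen from Re z < 0).\<close>
definition left_region :: "complex \<Rightarrow> complex set" where
  "left_region p = (if Re p = 0 then {z \<in> S_slit. 0 < Re z} else S_slit)"

definition right_region :: "complex \<Rightarrow> complex set" where
  "right_region p = (if Re p = 0 then {z \<in> S_slit. Re z < 0} else S_slit)"

definition bval :: "(complex \<Rightarrow> complex set) \<Rightarrow> (complex \<Rightarrow> complex) \<Rightarrow> complex \<Rightarrow> complex" where
  "bval R f p = Lim (at p within R p) f"

definition left_boundary_segment :: "complex \<Rightarrow> complex \<Rightarrow> bool" where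
  "left_boundary_segment a b \<longleftrightarrow>
     (Re a = - 1/2 \<and> Re b = - 1/2) \<or> (Re a = 0 \<and> Re b = 0 \<and> Im a < 0 \<and> Im b < 0)"

definition right_boundary_segment :: "complex \<Rightarrow> complex \<Rightarrow> bool" where
  "right_boundary_segment a b \<longleftrightarrow>
     (Re a = 1/2 \<and> Re b = 1/2) \<or> (Re a = 0 \<and> Re b = 0 \<and> Im a < 0 \<and> Im b < 0)"

definition extends_continuously ::
  "(complex \<Rightarrow> complex) \<Rightarrow> (complex \<Rightarrow> complex) \<Rightarrow> (complex \<Rightarrow> complex set) \<Rightarrow> complex \<Rightarrow> complex \<Rightarrow> bool" where
  "extends_continuously K1 KB R a b \<longleftrightarrow>
     continuous_on (closed_segment a b) KB \<and>
     (\<forall>p\<in>closed_segment a b. (K1 \<longlongrightarrow> KB p) (at p within R p))"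

text \<open>The four kernels, as functions of the values k_j = K_j(z_j), s_j = sqrt(phi'(z_j)),
  f_j = phi(z_j).\<close>
definition Kcc :: "complex \<Rightarrow> complex \<Rightarrow> complex \<Rightarrow> complex \<Rightarrow> complex \<Rightarrow> complex \<Rightarrow> complex" where
  "Kcc k1 s1 f1 k2 s2 f2 = k1 * s1 * (k2 * s2) / (f1 - f2)"
definition Kcb :: "complex \<Rightarrow> complex \<Rightarrow> complex \<Rightarrow> complex \<Rightarrow> complex \<Rightarrow> complex \<Rightarrow> complex" where
  "Kcb k1 s1 f1 k2 s2 f2 = k1 * s1 * cnj (k2 * s2) / (f1 - cnj f2)"
definition Kbc :: "complex \<Rightarrow> complex \<Rightarrow> complex \<Rightarrow> complex \<Rightarrow> complex \<Rightarrow> complex \<Rightarrow> complex" where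
  "Kbc k1 s1 f1 k2 s2 f2 = cnj (k1 * s1) * (k2 * s2) / (cnj f1 - f2)"
definition Kbb :: "complex \<Rightarrow> complex \<Rightarrow> complex \<Rightarrow> complex \<Rightarrow> complex \<Rightarrow> complex \<Rightarrow> complex" where
  "Kbb k1 s1 f1 k2 s2 f2 = cnj (k1 * s1) * cnj (k2 * s2) / (cnj f1 - cnj f2)"

definition has_dz_dzbar_integral ::
  "(complex \<Rightarrow> complex) \<Rightarrow> (complex \<Rightarrow> complex) \<Rightarrow> complex \<Rightarrow> complex \<Rightarrow> complex \<Rightarrow> bool" where
  "has_dz_dzbar_integral F G a b I \<longleftrightarrow>
     ((\<lambda>t. F (linepath a b t) * (b - a) + G (linepath a b t) * cnj (b - a)) has_integral I) {0..1}"

end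

theory Submission
  imports Defs
begin


lemma dist_neg_aux: "dist (- a) (b::complex) = norm (b + a)"
  by (metis add.commute diff_minus_eq_add dist_norm minus_diff_eq norm_minus_cancel)

lemma norm_neg_aux: "norm (- a - (b::complex)) = norm (b + a)"
  by (metis dist_neg_aux dist_norm)

lemma sqrt_lim:
  fixes f :: "complex \<Rightarrow> complex"
  assumes conv: "convex A" and cont: "continuous_on A f"
    and lim: "((\<lambda>z. (f z)^2) \<longlongrightarrow> D) (at p within A)" and pA: "p \<notin> A"
  shows "\<exists>s. s^2 = D \<and> (f \<longlongrightarrow> s) (at p within A)"
proof (cases "D = 0")
  case True
  have "((\<lambda>z. sqrt (norm ((f z)^2))) \<longlongrightarrow> sqrt (norm D)) (at p within A)"
    by (intro tendsto_intros lim)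
  then have "((\<lambda>z. norm (f z)) \<longlongrightarrow> 0) (at p within A)"
    using True by (simp add: norm_power)
  then have "(f \<longlongrightarrow> 0) (at p within A)"
    using tendsto_norm_zero_cancel by blast
  then show ?thesis using True by auto
next
  case False
  define s0 where "s0 = csqrt D"
  define r where "r = norm s0"
  have s0sq: "s0^2 = D" by (simp add: s0_def)
  have rpos: "r > 0" using False by (simp add: r_def s0_def)
  have key: "norm (f z - s) * norm (f z + s) = norm ((f z)^2 - D)" if "s^2 = D" for z s
    using that by (simp add: norm_mult[symmetric] power2_eq_square algebra_simps)
  have "\<forall>\<^sub>F z in at p within A. dist ((f z)^2) D < r^2"
    using lim rpos by (simp add: tendsto_iff)
  then obtain d where d: "d > 0" and dH: "\<And>z. z \<in> A \<Longrightarrow> 0 < dist z p \<Longrightarrow> dist z p < d \<Longrightarrow> dist ((f z)^2) D < r^2"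
    by (auto simp: eventually_at)
  define C where "C = A \<inter> ball p d"
  have Cconn: "connected (f ` C)"
    unfolding C_def
    by (intro connected_continuous_image convex_connected convex_Int conv convex_ball
          continuous_on_subset[OF cont]) auto
  have Cin: "f z \<in> ball s0 r \<union> ball (-s0) r" if "z \<in> C" for z
  proof -
    have zA: "z \<in> A" and zd: "dist z p < d" using that by (auto simp: C_def dist_commute)
    have "z \<noteq> p" using zA pA by auto
    then have "norm ((f z)^2 - D) < r^2" using dH[OF zA _ zd] by (simp add: dist_norm)
    then have "norm (f z - s0) * norm (f z + s0) < r * r"
      using key[OF s0sq] by (simp add: power2_eq_square)
    then have "norm (f z - s0) < r \<or> norm (f z + s0) < r"
      using mult_mono[of r "norm (f z - s0)" r "norm (f z + s0)"] rpos by force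
    then show ?thesis unfolding Un_iff mem_ball dist_neg_aux by (auto simp: dist_norm norm_minus_commute)
  qed
  have disj: "ball s0 r \<inter> ball (-s0) r \<inter> f ` C = {}"
  proof -
    have "False" if "norm (x - s0) < r" "norm (x + s0) < r" for x
    proof -
      have "norm (2 * s0) \<le> norm (x + s0) + norm (x - s0)"
        using norm_triangle_ineq4[of "x + s0" "x - s0"] by (simp add: algebra_simps)
      then show False using that by (simp add: r_def norm_mult)
    qed
    moreover have "norm (-s0 - x) = norm (x + s0)" for x by (metis dist_neg_aux dist_norm)
    moreover have "norm (s0 - x) = norm (x - s0)" for x by (rule norm_minus_commute)
    ultimately show ?thesis by (auto simp: dist_norm)
  qed
  from connectedD[OF Cconn open_ball open_ball disj] Cin
  obtain s where ss: "s^2 = D" and sC: "\<And>z. z \<in> C \<Longrightarrow> norm (f z - s) < r" and nr: "norm s = r"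
  proof -
    assume *: "\<And>s. s\<^sup>2 = D \<Longrightarrow> (\<And>z. z \<in> C \<Longrightarrow> cmod (f z - s) < r) \<Longrightarrow> cmod s = r \<Longrightarrow> thesis"
    from connectedD[OF Cconn open_ball open_ball disj] Cin
    have "(\<forall>z\<in>C. f z \<in> ball (-s0) r) \<or> (\<forall>z\<in>C. f z \<in> ball s0 r)" by blast
    then show thesis
    proof
      assume "\<forall>z\<in>C. f z \<in> ball (-s0) r"
      then show thesis by (intro *[of "-s0"]) (auto simp: s0sq r_def dist_norm, metis norm_neg_aux)
    next
      assume "\<forall>z\<in>C. f z \<in> ball s0 r"
      then show thesis by (intro *[of "s0"]) (auto simp: s0sq r_def dist_norm norm_minus_commute)
    qed
  qed
  have "(f \<longlongrightarrow> s) (at p within A)"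
  proof (rule tendstoI)
    fix e :: real assume e: "e > 0"
    have "\<forall>\<^sub>F z in at p within A. dist ((f z)^2) D < e * r"
      using lim rpos e by (simp add: tendsto_iff)
    moreover have "\<forall>\<^sub>F z in at p within A. z \<in> C"
      using d by (auto simp: eventually_at C_def dist_commute)
    ultimately show "\<forall>\<^sub>F z in at p within A. dist (f z) s < e"
    proof eventually_elim
      case (elim z)
      have a: "norm (f z - s) < r" using sC elim(2) .
      have "2 * r \<le> norm (f z + s) + norm (f z - s)"
        using norm_triangle_ineq4[of "f z + s" "f z - s"] nr by (simp add: algebra_simps norm_mult)
      then have b: "norm (f z + s) > r" using a by linarith
      have "norm (f z - s) * norm (f z + s) < e * r"
        using elim(1) key[OF ss] by (simp add: dist_norm)
      then have "norm (f z - s) * r < e * r"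
        using b mult_left_mono[of r "norm (f z + s)" "norm (f z - s)"] by simp
      then show ?case using rpos by (simp add: dist_norm)
    qed
  qed
  then show ?thesis using ss by auto
qed



definition Hm :: "complex set" where "Hm = {z. - 1/2 < Re z \<and> Re z < 0}"
definition Hp :: "complex set" where "Hp = {z. 0 < Re z \<and> Re z < 1/2}"
definition ex :: "complex \<Rightarrow> complex" where "ex z = exp (- 2 * of_real pi * \<i> * z)"
definition gp :: "complex \<Rightarrow> complex" where
  "gp w = of_real (sqrt ((cmod w + Re w)/2)) + \<i> * of_real (sqrt ((cmod w - Re w)/2))"
definition gm :: "complex \<Rightarrow> complex" where
  "gm w = of_real (sqrt ((cmod w + Re w)/2)) - \<i> * of_real (sqrt ((cmod w - Re w)/2))"

lemma phi_ex: "phi z = (1/2) * (\<i> * csqrt (ex z - 1))"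
  by (simp add: phi_def ex_def)

lemma Im_ex: "Im (ex z) = exp (2*pi*Im z) * sin (-(2*pi*Re z))"
  by (simp add: ex_def Im_exp)
lemma Re_ex: "Re (ex z) = exp (2*pi*Im z) * cos (-(2*pi*Re z))"
  by (simp add: ex_def Re_exp)

lemma Hm_Im: "z \<in> Hm \<Longrightarrow> Im (ex z) > 0"
proof -
  assume "z \<in> Hm"
  then have x: "- 1/2 < Re z" "Re z < 0" unfolding Hm_def by auto
  have "0 < pi * (-Re z)" "0 < pi * (1 + 2 * Re z)" using x by (simp_all add: mult_pos_neg mult_neg_pos)
  then have a: "0 < -(2*pi*Re z)" "-(2*pi*Re z) < pi" by (simp_all add: algebra_simps)
  have "sin (-(2*pi*Re z)) > 0" by (rule sin_gt_zero[OF a])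
  then show ?thesis unfolding Im_ex by (simp add: mult_pos_neg)
qed
lemma Hp_Im: "z \<in> Hp \<Longrightarrow> Im (ex z) < 0"
proof -
  assume "z \<in> Hp"
  then have "sin (2*pi*Re z) > 0" unfolding Hp_def by (auto intro!: sin_gt_zero)
  then show ?thesis unfolding Im_ex by (simp add: mult_pos_neg)
qed

lemma csqrt_gp: "Im w > 0 \<Longrightarrow> csqrt w = gp w"
  by (simp add: complex_eq_iff gp_def)
lemma csqrt_gm: "Im w < 0 \<Longrightarrow> csqrt w = gm w"
  by (simp add: complex_eq_iff gm_def)

lemma isCont_gp: "isCont gp w"
  unfolding gp_def by (intro continuous_intros isCont_Re) auto
lemma isCont_gm: "isCont gm w"
  unfolding gm_def by (intro continuous_intros isCont_Re) auto

lemma deriv_phi: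
  assumes "Im (ex z) \<noteq> 0"
  shows "deriv phi z = (1/2) * (\<i> * ((ex z * (- 2 * of_real pi * \<i>)) / (2 * csqrt (ex z - 1))))"
proof -
  have nn: "ex z - 1 \<notin> \<real>\<^sub>\<le>\<^sub>0" using assms by (auto simp: complex_nonpos_Reals_iff)
  have "(phi has_field_derivative (1/2) * (\<i> * ((ex z * (- 2 * of_real pi * \<i>)) / (2 * csqrt (ex z - 1))))) (at z)"
    unfolding phi_ex[abs_def] using nn unfolding ex_def
    by (auto intro!: derivative_eq_intros) (simp add: algebra_simps)
  then show ?thesis by (rule DERIV_imp_deriv)
qed

lemma gpm_neg:
  assumes "Im v = 0" "Re v < 0"
  shows "gp v = \<i> * of_real (sqrt (- Re v))" "gm v = - \<i> * of_real (sqrt (- Re v))"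
proof -
  have "cmod v = - Re v" using assms by (simp add: cmod_eq_Re)
  then show "gp v = \<i> * of_real (sqrt (- Re v))" "gm v = - \<i> * of_real (sqrt (- Re v))"
    by (simp_all add: gp_def gm_def)
qed

lemma side_lim:
  assumes HG: "(H = Hm \<and> g = gp) \<or> (H = Hp \<and> g = gm)"
    and g0: "g (ex p - 1) \<noteq> 0"
  shows "(phi \<longlongrightarrow> (1/2) * (\<i> * g (ex p - 1))) (at p within H)"
    and "(deriv phi \<longlongrightarrow> (1/2) * (\<i> * ((ex p * (- 2 * of_real pi * \<i>)) / (2 * g (ex p - 1))))) (at p within H)"
proof -
  have eqg: "csqrt (ex z - 1) = g (ex z - 1)" if "z \<in> H" for z
    using HG that Hm_Im Hp_Im csqrt_gp csqrt_gm by force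
  have im0: "Im (ex z) \<noteq> 0" if "z \<in> H" for z
    using HG that Hm_Im Hp_Im by force
  have gc: "isCont g w" for w using HG isCont_gp isCont_gm by auto
  have cex: "isCont ex z" for z unfolding ex_def by (intro continuous_intros)
  have c1: "isCont (\<lambda>z. g (ex z - 1)) p"
    by (rule continuous_at_compose[unfolded o_def, OF _ gc]) (intro continuous_intros cex)
  have t1: "((\<lambda>z. (1/2) * (\<i> * g (ex z - 1))) \<longlongrightarrow> (1/2) * (\<i> * g (ex p - 1))) (at p within H)"
    using c1 by (intro tendsto_intros) (auto simp: isCont_def intro: tendsto_within_subset)
  have t2: "((\<lambda>z. (1/2) * (\<i> * ((ex z * (- 2 * of_real pi * \<i>)) / (2 * g (ex z - 1))))) \<longlongrightarrow>
      (1/2) * (\<i> * ((ex p * (- 2 * of_real pi * \<i>)) / (2 * g (ex p - 1))))) (at p within H)"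
    using c1 cex g0 by (intro tendsto_intros) (auto simp: isCont_def intro: tendsto_within_subset)
  show "(phi \<longlongrightarrow> (1/2) * (\<i> * g (ex p - 1))) (at p within H)"
    by (rule tendsto_cong[THEN iffD1, OF _ t1]) (auto simp: eventually_at_filter phi_ex eqg)
  show "(deriv phi \<longlongrightarrow> (1/2) * (\<i> * ((ex p * (- 2 * of_real pi * \<i>)) / (2 * g (ex p - 1))))) (at p within H)"
    by (rule tendsto_cong[THEN iffD1, OF _ t2]) (auto simp: eventually_at_filter deriv_phi im0 eqg)
qed



lemma re_zero_sq:
  fixes X :: complex
  assumes "X^2 = - of_real u" "u \<ge> 0"
  shows "Re X = 0"
proof -
  have b: "Re (X^2) = - u" "Im (X^2) = 0" using assms(1) by simp_all
  then have a: "Re X * Re X - Im X * Im X = - u" "Re X * Im X = 0"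
    by (auto simp: power2_eq_square)
  show ?thesis
  proof (rule ccontr)
    assume "Re X \<noteq> 0"
    then have "Im X = 0" using a(2) by simp
    then have "Re X * Re X = - u" using a(1) by simp
    moreover have "Re X * Re X > 0" using \<open>Re X \<noteq> 0\<close> by (metis mult_eq_0_iff not_real_square_gt_zero)
    ultimately show False using assms(2) by linarith
  qed
qed

lemma cis_sq_m: "(cis (- (pi/4)))^2 = - \<i>"
proof -
  have "(cis (- (pi/4)))^2 = cis (- (pi/2))" by (simp add: power2_eq_square cis_mult)
  then show ?thesis by (simp add: complex_eq_iff)
qed
lemma cis_sq_p: "(cis (pi/4))^2 = \<i>"
proof -
  have "(cis (pi/4))^2 = cis (pi/2)" by (simp add: power2_eq_square cis_mult)
  then show ?thesis by (simp add: complex_eq_iff)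
qed

lemma d_sq: "Re d = 0 \<Longrightarrow> d^2 = - of_real ((Im d)^2)"
  by (simp add: complex_eq_iff power2_eq_square)

lemma re_zero_left:
  assumes "k = cis (- pi/4) * of_real r" "s^2 = \<i> * of_real c" "c \<ge> 0" "Re d = 0"
  shows "Re (k * s * d) = 0"
proof (rule re_zero_sq)
  show "(k * s * d)^2 = - of_real (r^2 * c * (Im d)^2)"
    using assms by (simp add: power_mult_distrib cis_sq_m d_sq algebra_simps)
  show "r^2 * c * (Im d)^2 \<ge> 0" using assms by simp
qed

lemma re_zero_right:
  assumes "k = cis (pi/4) * of_real r" "s^2 = - \<i> * of_real c" "c \<ge> 0" "Re d = 0"
  shows "Re (k * s * d) = 0"
proof (rule re_zero_sq)
  show "(k * s * d)^2 = - of_real (r^2 * c * (Im d)^2)"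
    using assms by (simp add: power_mult_distrib cis_sq_p d_sq algebra_simps)
  show "r^2 * c * (Im d)^2 \<ge> 0" using assms by simp
qed

lemma integrand_zero:
  assumes "cnj f = f" "Re (k * s * d) = 0"
  shows "Kcc k s f k2 s2 f2 * d + Kbc k s f k2 s2 f2 * cnj d = 0"
    and "Kcb k s f k2 s2 f2 * d + Kbb k s f k2 s2 f2 * cnj d = 0"
proof -
  define X where "X = k * s * d"
  have "Re X = 0" using assms(2) X_def by simp
  then have z0: "X + cnj X = 0" by (simp only: complex_add_cnj) simp
  then have z: "k * s * d + cnj (k * s * d) = 0" unfolding X_def .
  have "Kcc k s f k2 s2 f2 * d + Kbc k s f k2 s2 f2 * cnj d
      = (k2 * s2) / (f - f2) * (k * s * d + cnj (k * s * d))"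
    using assms(1) by (simp add: Kcc_def Kbc_def add_divide_distrib algebra_simps)
  then show "Kcc k s f k2 s2 f2 * d + Kbc k s f k2 s2 f2 * cnj d = 0" using z by simp
  have "Kcb k s f k2 s2 f2 * d + Kbb k s f k2 s2 f2 * cnj d
      = cnj (k2 * s2) / (f - cnj f2) * (k * s * d + cnj (k * s * d))"
    using assms(1) by (simp add: Kcb_def Kbb_def add_divide_distrib algebra_simps)
  then show "Kcb k s f k2 s2 f2 * d + Kbb k s f k2 s2 f2 * cnj d = 0" using z by simp
qed



lemma Hp_ne_Hm: "Hp \<noteq> Hm"
proof -
  have "(1/4::complex) \<in> Hp" "(1/4::complex) \<notin> Hm" by (auto simp: Hp_def Hm_def)
  then show ?thesis by auto
qed

lemma convex_Hm: "convex Hm"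
proof -
  have "Hm = {z. Re z > - 1/2} \<inter> {z. Re z < 0}" by (auto simp: Hm_def)
  then show ?thesis by (metis convex_Int convex_halfspace_Re_gt convex_halfspace_Re_lt)
qed
lemma convex_Hp: "convex Hp"
proof -
  have "Hp = {z. Re z > 0} \<inter> {z. Re z < 1/2}" by (auto simp: Hp_def)
  then show ?thesis by (metis convex_Int convex_halfspace_Re_gt convex_halfspace_Re_lt)
qed

lemma point_gen:
  assumes HG: "(H = Hm \<and> g = gp) \<or> (H = Hp \<and> g = gm)"
    and filt: "at p within R p = at p within H"
    and pH: "p \<notin> H" and lp: "p islimpt H"
    and im: "Im (ex p) = 0" and re: "Re (ex p) < 1"
    and sqc: "continuous_on H sq" and sqd: "\<forall>z\<in>H. (sq z)^2 = deriv phi z"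
  shows "cnj (bval R phi p) = bval R phi p"
    and "(bval R sq p)^2 = (if H = Hm then - \<i> else \<i>) * of_real (pi * Re (ex p) / (2 * sqrt (1 - Re (ex p))))"
proof -
  define e where "e = Re (ex p)"
  define q where "q = sqrt (1 - e)"
  have qpos: "q > 0" using re by (simp add: q_def e_def)
  have exp_eq: "ex p = of_real e" using im by (simp add: complex_eq_iff e_def)
  have v: "Im (ex p - 1) = 0" "Re (ex p - 1) < 0" using im re by auto
  have mre: "- Re (ex p - 1) = 1 - e" by (simp add: e_def)
  have gv: "g (ex p - 1) = (if H = Hm then \<i> else - \<i>) * of_real q"
    using HG gpm_neg[OF v] Hp_ne_Hm q_def mre by auto
  have g0: "g (ex p - 1) \<noteq> 0" using gv qpos by auto
  have nt: "\<not> trivial_limit (at p within H)" using lp by (simp add: trivial_limit_within)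
  note sl = side_lim[OF HG g0]
  have "bval R phi p = (1/2) * (\<i> * g (ex p - 1))"
    unfolding bval_def filt by (rule tendsto_Lim[OF nt sl(1)])
  then show "cnj (bval R phi p) = bval R phi p"
    using gv by (cases "H = Hm") (simp_all add: complex_eq_iff)
  have "((\<lambda>z. (sq z)^2) \<longlongrightarrow> (1/2) * (\<i> * ((ex p * (- 2 * of_real pi * \<i>)) / (2 * g (ex p - 1))))) (at p within H)"
    by (rule tendsto_cong[THEN iffD1, OF _ sl(2)]) (use sqd in \<open>auto simp: eventually_at_filter\<close>)
  from sqrt_lim[OF _ sqc this pH] obtain s where
    s: "s^2 = (1/2) * (\<i> * ((ex p * (- 2 * of_real pi * \<i>)) / (2 * g (ex p - 1))))"
    "(sq \<longlongrightarrow> s) (at p within H)"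
    using HG convex_Hm convex_Hp by auto
  have "bval R sq p = s" unfolding bval_def filt by (rule tendsto_Lim[OF nt s(2)])
  then show "(bval R sq p)^2 = (if H = Hm then - \<i> else \<i>) * of_real (pi * Re (ex p) / (2 * sqrt (1 - Re (ex p))))"
    using s(1) gv qpos unfolding exp_eq e_def[symmetric] q_def[symmetric]
    by (cases "H = Hm") (simp_all add: field_simps q_def[symmetric])
qed



lemma limpt_plus:
  assumes "Re p = a" "\<And>z. a < Re z \<Longrightarrow> Re z < a + 1/2 \<Longrightarrow> z \<in> H"
  shows "p islimpt H"
  unfolding islimpt_approachable
proof (intro allI impI)
  fix e :: real assume e: "e > 0"
  define x where "x = p + of_real (min (e/2) (1/4))"
  have "x \<in> H" using assms e by (intro assms(2)) (auto simp: x_def)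
  moreover have "x \<noteq> p" using e by (auto simp: x_def)
  moreover have "dist x p < e" using e by (simp add: x_def dist_norm)
  ultimately show "\<exists>x'\<in>H. x' \<noteq> p \<and> dist x' p < e" by blast
qed

lemma limpt_minus:
  assumes "Re p = a" "\<And>z. a - 1/2 < Re z \<Longrightarrow> Re z < a \<Longrightarrow> z \<in> H"
  shows "p islimpt H"
  unfolding islimpt_approachable
proof (intro allI impI)
  fix e :: real assume e: "e > 0"
  define x where "x = p - of_real (min (e/2) (1/4))"
  have "x \<in> H" using assms e by (intro assms(2)) (auto simp: x_def)
  moreover have "x \<noteq> p" using e by (auto simp: x_def)
  moreover have "dist x p < e" using e by (simp add: x_def dist_norm)
  ultimately show "\<exists>x'\<in>H. x' \<noteq> p \<and> dist x' p < e" by blast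
qed

lemma Hm_sub: "Hm \<subseteq> S_slit" by (auto simp: Hm_def S_slit_def)
lemma Hp_sub: "Hp \<subseteq> S_slit" by (auto simp: Hp_def S_slit_def)

lemma filt_line_m:
  assumes "Re p = - 1/2"
  shows "at p within S_slit = at p within Hm"
proof (rule at_within_nhd[of p "ball p (1/2)"])
  have rz: "Re z < 0" if "z \<in> ball p (1/2)" for z
  proof -
    have "\<bar>Re (z - p)\<bar> < 1/2" using that abs_Re_le_cmod[of "z - p"]
      by (simp add: dist_norm norm_minus_commute)
    then have "\<bar>Re z - Re p\<bar> < 1/2" by simp
    then show ?thesis using assms by linarith
  qed
  show "S_slit \<inter> ball p (1/2) - {p} = Hm \<inter> ball p (1/2) - {p}"
  proof (intro equalityI subsetI)
    fix z assume "z \<in> S_slit \<inter> ball p (1/2) - {p}"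
    then show "z \<in> Hm \<inter> ball p (1/2) - {p}" using rz[of z] by (auto simp: S_slit_def Hm_def)
  next
    fix z assume "z \<in> Hm \<inter> ball p (1/2) - {p}"
    then show "z \<in> S_slit \<inter> ball p (1/2) - {p}" using rz[of z] by (auto simp: S_slit_def Hm_def)
  qed
qed auto

lemma filt_line_p:
  assumes "Re p = 1/2"
  shows "at p within S_slit = at p within Hp"
proof (rule at_within_nhd[of p "ball p (1/2)"])
  have rz: "Re z > 0" if "z \<in> ball p (1/2)" for z
  proof -
    have "\<bar>Re (z - p)\<bar> < 1/2" using that abs_Re_le_cmod[of "z - p"]
      by (simp add: dist_norm norm_minus_commute)
    then have "\<bar>Re z - Re p\<bar> < 1/2" by simp
    then show ?thesis using assms by linarith
  qed
  show "S_slit \<inter> ball p (1/2) - {p} = Hp \<inter> ball p (1/2) - {p}"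
  proof (intro equalityI subsetI)
    fix z assume "z \<in> S_slit \<inter> ball p (1/2) - {p}"
    then show "z \<in> Hp \<inter> ball p (1/2) - {p}" using rz[of z] by (auto simp: S_slit_def Hp_def)
  next
    fix z assume "z \<in> Hp \<inter> ball p (1/2) - {p}"
    then show "z \<in> S_slit \<inter> ball p (1/2) - {p}" using rz[of z] by (auto simp: S_slit_def Hp_def)
  qed
qed auto

lemma ex_line_m: "Re p = - 1/2 \<Longrightarrow> Im (ex p) = 0 \<and> Re (ex p) < 0"
  by (simp add: Im_ex Re_ex)
lemma ex_line_p: "Re p = 1/2 \<Longrightarrow> Im (ex p) = 0 \<and> Re (ex p) < 0"
proof -
  assume "Re p = 1/2"
  then have "-(2*pi*Re p) = - pi" by simp
  then show ?thesis unfolding Im_ex Re_ex by (simp only:) simp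
qed
lemma ex_slit: "Re p = 0 \<Longrightarrow> Im p < 0 \<Longrightarrow> Im (ex p) = 0 \<and> 0 < Re (ex p) \<and> Re (ex p) < 1"
  by (simp add: Im_ex Re_ex mult_pos_neg)

lemma left_point:
  assumes sq_cont: "continuous_on S_slit sq"
    and sq_branch: "\<forall>z\<in>S_slit. (sq z)\<^sup>2 = deriv phi z"
    and p: "Re p = - 1/2 \<or> (Re p = 0 \<and> Im p < 0)"
  shows "cnj (bval left_region phi p) = bval left_region phi p \<and>
         (\<exists>c\<ge>0. (bval left_region sq p)^2 = \<i> * of_real c)"
  using p
proof
  assume pr: "Re p = - 1/2"
  have filt: "at p within left_region p = at p within Hm"
    using filt_line_m[OF pr] pr by (simp add: left_region_def)
  have pH: "p \<notin> Hm" using pr by (simp add: Hm_def)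
  have lp: "p islimpt Hm" by (rule limpt_plus[OF pr]) (auto simp: Hm_def)
  note ee = ex_line_m[OF pr]
  have sb: "\<forall>z\<in>Hm. (sq z)^2 = deriv phi z" using sq_branch Hm_sub by auto
  have hg: "Hm = Hm \<and> gp = gp \<or> Hm = Hp \<and> gp = gm" by simp
  have r1: "Re (ex p) < 1" using ee by simp
  note pg0 = point_gen[where R=left_region and p=p and sq=sq, OF hg filt pH lp conjunct1[OF ee] r1 continuous_on_subset[OF sq_cont Hm_sub] sb]
  have c: "- (pi * Re (ex p) / (2 * sqrt (1 - Re (ex p)))) \<ge> 0"
    using ee by (simp add: divide_nonpos_pos mult_nonneg_nonpos)
  show ?thesis using pg0 ee c
    by (intro conjI exI[of _ "- (pi * Re (ex p) / (2 * sqrt (1 - Re (ex p))))"]) auto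
next
  assume pr: "Re p = 0 \<and> Im p < 0"
  have filt: "at p within left_region p = at p within Hp"
  proof -
    have "left_region p = Hp" using pr by (auto simp: left_region_def Hp_def S_slit_def)
    then show ?thesis by simp
  qed
  have pH: "p \<notin> Hp" using pr by (simp add: Hp_def)
  have lp: "p islimpt Hp" by (rule limpt_plus[of p 0]) (use pr in \<open>auto simp: Hp_def\<close>)
  note ee = ex_slit[OF conjunct1[OF pr] conjunct2[OF pr]]
  have sb: "\<forall>z\<in>Hp. (sq z)^2 = deriv phi z" using sq_branch Hp_sub by auto
  have hg: "Hp = Hm \<and> gm = gp \<or> Hp = Hp \<and> gm = gm" by simp
  have r1: "Re (ex p) < 1" using ee by simp
  note pg0 = point_gen[where R=left_region and p=p and sq=sq, OF hg filt pH lp conjunct1[OF ee] r1 continuous_on_subset[OF sq_cont Hp_sub] sb]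
  have c: "(pi * Re (ex p) / (2 * sqrt (1 - Re (ex p)))) \<ge> 0"
    using ee by simp
  show ?thesis using pg0 ee c Hp_ne_Hm
    by (intro conjI exI[of _ "(pi * Re (ex p) / (2 * sqrt (1 - Re (ex p))))"]) auto
qed

lemma right_point:
  assumes sq_cont: "continuous_on S_slit sq"
    and sq_branch: "\<forall>z\<in>S_slit. (sq z)\<^sup>2 = deriv phi z"
    and p: "Re p = 1/2 \<or> (Re p = 0 \<and> Im p < 0)"
  shows "cnj (bval right_region phi p) = bval right_region phi p \<and>
         (\<exists>c\<ge>0. (bval right_region sq p)^2 = - \<i> * of_real c)"
  using p
proof
  assume pr: "Re p = 1/2"
  have filt: "at p within right_region p = at p within Hp"
    using filt_line_p[OF pr] pr by (simp add: right_region_def)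
  have pH: "p \<notin> Hp" using pr by (simp add: Hp_def)
  have lp: "p islimpt Hp" by (rule limpt_minus[OF pr]) (auto simp: Hp_def)
  note ee = ex_line_p[OF pr]
  have sb: "\<forall>z\<in>Hp. (sq z)^2 = deriv phi z" using sq_branch Hp_sub by auto
  have hg: "Hp = Hm \<and> gm = gp \<or> Hp = Hp \<and> gm = gm" by simp
  have r1: "Re (ex p) < 1" using ee by simp
  note pg0 = point_gen[where R=right_region and p=p and sq=sq, OF hg filt pH lp conjunct1[OF ee] r1 continuous_on_subset[OF sq_cont Hp_sub] sb]
  have c: "- (pi * Re (ex p) / (2 * sqrt (1 - Re (ex p)))) \<ge> 0"
    using ee by (simp add: divide_nonpos_pos mult_nonneg_nonpos)
  show ?thesis using pg0 ee c Hp_ne_Hm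
    by (intro conjI exI[of _ "- (pi * Re (ex p) / (2 * sqrt (1 - Re (ex p))))"]) auto
next
  assume pr: "Re p = 0 \<and> Im p < 0"
  have filt: "at p within right_region p = at p within Hm"
  proof -
    have "right_region p = Hm" using pr by (auto simp: right_region_def Hm_def S_slit_def)
    then show ?thesis by simp
  qed
  have pH: "p \<notin> Hm" using pr by (simp add: Hm_def)
  have lp: "p islimpt Hm" by (rule limpt_minus[of p 0]) (use pr in \<open>auto simp: Hm_def\<close>)
  note ee = ex_slit[OF conjunct1[OF pr] conjunct2[OF pr]]
  have sb: "\<forall>z\<in>Hm. (sq z)^2 = deriv phi z" using sq_branch Hm_sub by auto
  have hg: "Hm = Hm \<and> gp = gp \<or> Hm = Hp \<and> gp = gm" by simp
  have r1: "Re (ex p) < 1" using ee by simp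
  note pg0 = point_gen[where R=right_region and p=p and sq=sq, OF hg filt pH lp conjunct1[OF ee] r1 continuous_on_subset[OF sq_cont Hm_sub] sb]
  have c: "(pi * Re (ex p) / (2 * sqrt (1 - Re (ex p)))) \<ge> 0"
    using ee by simp
  show ?thesis using pg0 ee c
    by (intro conjI exI[of _ "(pi * Re (ex p) / (2 * sqrt (1 - Re (ex p))))"]) auto
qed


theorem lemma7p2:
  fixes K1 K2 sq :: "complex \<Rightarrow> complex" and z2 :: complex
  assumes sq_cont: "continuous_on S_slit sq"
    and sq_branch: "\<forall>z\<in>S_slit. (sq z)\<^sup>2 = deriv phi z"
    and z2: "z2 \<in> S_slit"
  shows
   "(\<forall>a b KB. left_boundary_segment a b \<and> extends_continuously K1 KB left_region a b \<and>
        (\<forall>p\<in>closed_segment a b. \<exists>r::real. KB p = cis (- pi/4) * of_real r) \<longrightarrow>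
      has_dz_dzbar_integral
        (\<lambda>p. Kcc (KB p) (bval left_region sq p) (bval left_region phi p) (K2 z2) (sq z2) (phi z2))
        (\<lambda>p. Kbc (KB p) (bval left_region sq p) (bval left_region phi p) (K2 z2) (sq z2) (phi z2))
        a b 0 \<and>
      has_dz_dzbar_integral
        (\<lambda>p. Kcb (KB p) (bval left_region sq p) (bval left_region phi p) (K2 z2) (sq z2) (phi z2))
        (\<lambda>p. Kbb (KB p) (bval left_region sq p) (bval left_region phi p) (K2 z2) (sq z2) (phi z2))
        a b 0)
  \<and> (\<forall>a b KB. right_boundary_segment a b \<and> extends_continuously K1 KB right_region a b \<and>
        (\<forall>p\<in>closed_segment a b. \<exists>r::real. KB p = cis (pi/4) * of_real r) \<longrightarrow>
      has_dz_dzbar_integral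
        (\<lambda>p. Kcc (KB p) (bval right_region sq p) (bval right_region phi p) (K2 z2) (sq z2) (phi z2))
        (\<lambda>p. Kbc (KB p) (bval right_region sq p) (bval right_region phi p) (K2 z2) (sq z2) (phi z2))
        a b 0 \<and>
      has_dz_dzbar_integral
        (\<lambda>p. Kcb (KB p) (bval right_region sq p) (bval right_region phi p) (K2 z2) (sq z2) (phi z2))
        (\<lambda>p. Kbb (KB p) (bval right_region sq p) (bval right_region phi p) (K2 z2) (sq z2) (phi z2))
        a b 0)"
  proof (intro conjI allI impI)
  have segpts: "Re p = Re a \<and> (Im a < 0 \<longrightarrow> Im b < 0 \<longrightarrow> Im p < 0)" if rr: "Re a = Re b" and pp: "p \<in> closed_segment a b" for a b p :: complex
  proof -
    obtain u where u: "0 \<le> u" "u \<le> 1" "p = (1 - u) *\<^sub>R a + u *\<^sub>R b"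
      using pp by (auto simp: closed_segment_def)
    have "Re p = (1 - u) * Re a + u * Re b" using u(3) by simp
    also have "\<dots> = Re a" using rr by (simp add: algebra_simps)
    finally have "Re p = Re a" .
    moreover have "Im a < 0 \<longrightarrow> Im b < 0 \<longrightarrow> Im p < 0"
    proof (intro impI)
      assume "Im a < 0" "Im b < 0"
      then have "(1 - u) * Im a + u * Im b < 0" using u by (intro convex_bound_lt) auto
      then show "Im p < 0" using u(3) by simp
    qed
    ultimately show ?thesis by blast
  qed
  have lin: "linepath a b t \<in> closed_segment a b" if "t \<in> {0..1}" for a b :: complex and t
    using that linepath_image_01 by blast
  {
    fix a b :: complex and KB :: "complex \<Rightarrow> complex"
    assume H: "left_boundary_segment a b \<and> extends_continuously K1 KB left_region a b \<and>
        (\<forall>p\<in>closed_segment a b. \<exists>r::real. KB p = cis (- pi/4) * of_real r)"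
    have rab: "Re a = Re b" using H by (auto simp: left_boundary_segment_def)
    have pts: "Re p = - 1/2 \<or> (Re p = 0 \<and> Im p < 0)" if "p \<in> closed_segment a b" for p
      using segpts[OF rab that] H by (auto simp: left_boundary_segment_def)
    have rd: "Re (b - a) = 0" using rab by simp
    have pw: "Re (KB p * bval left_region sq p * (b - a)) = 0 \<and> cnj (bval left_region phi p) = bval left_region phi p"
      if pin: "p \<in> closed_segment a b" for p
    proof -
      have allr: "\<forall>p\<in>closed_segment a b. \<exists>r::real. KB p = cis (- pi/4) * of_real r"
        using H by (rule conjunct2[OF conjunct2])
      obtain r :: real where r: "KB p = cis (- pi/4) * of_real r" using bspec[OF allr pin] by (elim exE)
      note lpt = left_point[OF sq_cont sq_branch pts[OF pin]]
      obtain c where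
        c: "c \<ge> 0" "(bval left_region sq p)^2 = \<i> * of_real c"
        using conjunct2[OF lpt] by (elim exE conjE)
      have f: "cnj (bval left_region phi p) = bval left_region phi p" by (rule conjunct1[OF lpt])
      show ?thesis using re_zero_left[OF r c(2) c(1) rd] f by (intro conjI)
    qed
    show "has_dz_dzbar_integral
        (\<lambda>p. Kcc (KB p) (bval left_region sq p) (bval left_region phi p) (K2 z2) (sq z2) (phi z2))
        (\<lambda>p. Kbc (KB p) (bval left_region sq p) (bval left_region phi p) (K2 z2) (sq z2) (phi z2))
        a b 0"
      unfolding has_dz_dzbar_integral_def
    proof (subst has_integral_cong[where g="\<lambda>_. 0"])
      fix t :: real assume "t \<in> {0..1}"
      then have pp: "linepath a b t \<in> closed_segment a b" by (rule lin)
      show "Kcc (KB (linepath a b t)) (bval left_region sq (linepath a b t)) (bval left_region phi (linepath a b t)) (K2 z2) (sq z2) (phi z2) * (b - a) +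
            Kbc (KB (linepath a b t)) (bval left_region sq (linepath a b t)) (bval left_region phi (linepath a b t)) (K2 z2) (sq z2) (phi z2) * cnj (b - a) = 0"
        by (rule integrand_zero(1)[OF conjunct2[OF pw[OF pp]] conjunct1[OF pw[OF pp]]])
    qed (rule has_integral_0)
    show "has_dz_dzbar_integral
        (\<lambda>p. Kcb (KB p) (bval left_region sq p) (bval left_region phi p) (K2 z2) (sq z2) (phi z2))
        (\<lambda>p. Kbb (KB p) (bval left_region sq p) (bval left_region phi p) (K2 z2) (sq z2) (phi z2))
        a b 0"
      unfolding has_dz_dzbar_integral_def
    proof (subst has_integral_cong[where g="\<lambda>_. 0"])
      fix t :: real assume "t \<in> {0..1}"
      then have pp: "linepath a b t \<in> closed_segment a b" by (rule lin)
      show "Kcb (KB (linepath a b t)) (bval left_region sq (linepath a b t)) (bval left_region phi (linepath a b t)) (K2 z2) (sq z2) (phi z2) * (b - a) +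
            Kbb (KB (linepath a b t)) (bval left_region sq (linepath a b t)) (bval left_region phi (linepath a b t)) (K2 z2) (sq z2) (phi z2) * cnj (b - a) = 0"
        by (rule integrand_zero(2)[OF conjunct2[OF pw[OF pp]] conjunct1[OF pw[OF pp]]])
    qed (rule has_integral_0)
  }
  {
    fix a b :: complex and KB :: "complex \<Rightarrow> complex"
    assume H: "right_boundary_segment a b \<and> extends_continuously K1 KB right_region a b \<and>
        (\<forall>p\<in>closed_segment a b. \<exists>r::real. KB p = cis (pi/4) * of_real r)"
    have rab: "Re a = Re b" using H by (auto simp: right_boundary_segment_def)
    have pts: "Re p = 1/2 \<or> (Re p = 0 \<and> Im p < 0)" if "p \<in> closed_segment a b" for p
      using segpts[OF rab that] H by (auto simp: right_boundary_segment_def)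
    have rd: "Re (b - a) = 0" using rab by simp
    have pw: "Re (KB p * bval right_region sq p * (b - a)) = 0 \<and> cnj (bval right_region phi p) = bval right_region phi p"
      if pin: "p \<in> closed_segment a b" for p
    proof -
      have allr: "\<forall>p\<in>closed_segment a b. \<exists>r::real. KB p = cis (pi/4) * of_real r"
        using H by (rule conjunct2[OF conjunct2])
      obtain r :: real where r: "KB p = cis (pi/4) * of_real r" using bspec[OF allr pin] by (elim exE)
      note lpt = right_point[OF sq_cont sq_branch pts[OF pin]]
      obtain c where
        c: "c \<ge> 0" "(bval right_region sq p)^2 = - \<i> * of_real c"
        using conjunct2[OF lpt] by (elim exE conjE)
      have f: "cnj (bval right_region phi p) = bval right_region phi p" by (rule conjunct1[OF lpt])
      show ?thesis using re_zero_right[OF r c(2) c(1) rd] f by (intro conjI)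
    qed
    show "has_dz_dzbar_integral
        (\<lambda>p. Kcc (KB p) (bval right_region sq p) (bval right_region phi p) (K2 z2) (sq z2) (phi z2))
        (\<lambda>p. Kbc (KB p) (bval right_region sq p) (bval right_region phi p) (K2 z2) (sq z2) (phi z2))
        a b 0"
      unfolding has_dz_dzbar_integral_def
    proof (subst has_integral_cong[where g="\<lambda>_. 0"])
      fix t :: real assume "t \<in> {0..1}"
      then have pp: "linepath a b t \<in> closed_segment a b" by (rule lin)
      show "Kcc (KB (linepath a b t)) (bval right_region sq (linepath a b t)) (bval right_region phi (linepath a b t)) (K2 z2) (sq z2) (phi z2) * (b - a) +
            Kbc (KB (linepath a b t)) (bval right_region sq (linepath a b t)) (bval right_region phi (linepath a b t)) (K2 z2) (sq z2) (phi z2) * cnj (b - a) = 0"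
        by (rule integrand_zero(1)[OF conjunct2[OF pw[OF pp]] conjunct1[OF pw[OF pp]]])
    qed (rule has_integral_0)
    show "has_dz_dzbar_integral
        (\<lambda>p. Kcb (KB p) (bval right_region sq p) (bval right_region phi p) (K2 z2) (sq z2) (phi z2))
        (\<lambda>p. Kbb (KB p) (bval right_region sq p) (bval right_region phi p) (K2 z2) (sq z2) (phi z2))
        a b 0"
      unfolding has_dz_dzbar_integral_def
    proof (subst has_integral_cong[where g="\<lambda>_. 0"])
      fix t :: real assume "t \<in> {0..1}"
      then have pp: "linepath a b t \<in> closed_segment a b" by (rule lin)
      show "Kcb (KB (linepath a b t)) (bval right_region sq (linepath a b t)) (bval right_region phi (linepath a b t)) (K2 z2) (sq z2) (phi z2) * (b - a) +
            Kbb (KB (linepath a b t)) (bval right_region sq (linepath a b t)) (bval right_region phi (linepath a b t)) (K2 z2) (sq z2) (phi z2) * cnj (b - a) = 0"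
        by (rule integrand_zero(2)[OF conjunct2[OF pw[OF pp]] conjunct1[OF pw[OF pp]]])
    qed (rule has_integral_0)
  }
qed

end
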